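(* Let $\Delta:M_n\to M_n$ be a weak-2-local derivation which is symmetric (i.e. $\Delta(a^* )^*=\Delta(a)$ for all $a\in M_n$), let $p_1,\ldots,p_n$ be mutually orthogonal minimal projections in $M_n$ and $q=1-p_n$. Suppose $\Delta(qaq)=0$ for every $a\in M_n$ and $\Delta(e_{1n})=0$. Then $\Delta\equiv 0$.
   Context: $M_n=M_n(\mathbb{C})$. For $i,j$, $e_{ij}$ is the unique minimal partial isometry in $M_n$ with $e_{ij}^*e_{ij}=p_j$ and $e_{ij}e_{ij}^*=p_i$. A derivation on $M_n$ is a linear map $D$ with $D(ab)=D(a)b+aD(b)$. A (not necessarily linear) map $\Delta:M_n\to M_n$ is a weak-2-local derivation if for every $a,b\in M_n$ and every $\phi\in M_n^*$ there exists a derivation $D_{a,b,\phi}$ such that $\phi\Delta(a)=\phi D_{a,b,\phi}(a)$ and $\phi\Delta(b)=\phi D_{a,b,\phi}(b)$. *)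

theory Defs
  imports "HOL-Analysis.Analysis"
begin

text \<open>M_n(C) is rendered as the type complex^'n^'n (n = CARD('n)).\<close>

type_synonym 'n cmat = "complex ^'n ^'n"

definition cadj :: "'n::finite cmat \<Rightarrow> 'n cmat" where
  "cadj A = (\<chi> i j. cnj (A $ j $ i))"

definition is_projection :: "'n::finite cmat \<Rightarrow> bool" where
  "is_projection p \<longleftrightarrow> p ** p = p \<and> cadj p = p"

definition minimal_projection :: "'n::finite cmat \<Rightarrow> bool" where
  "minimal_projection p \<longleftrightarrow> is_projection p \<and> p \<noteq> 0 \<and>
     (\<forall>r. is_projection r \<and> r ** p = r \<longrightarrow> r = 0 \<or> r = p)"

definition cscale :: "complex \<Rightarrow> 'n::finite cmat \<Rightarrow> 'n cmat" where
  "cscale c A = (\<chi> i j. c * A $ i $ j)"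

definition is_derivation :: "('n::finite cmat \<Rightarrow> 'n cmat) \<Rightarrow> bool" where
  "is_derivation D \<longleftrightarrow> Vector_Spaces.linear cscale cscale D \<and>
     (\<forall>a b. D (a ** b) = D a ** b + a ** D b)"

definition weak_2_local_derivation :: "('n::finite cmat \<Rightarrow> 'n cmat) \<Rightarrow> bool" where
  "weak_2_local_derivation \<Delta> \<longleftrightarrow>
     (\<forall>a b (\<phi>::'n cmat \<Rightarrow> complex). Vector_Spaces.linear cscale (*) \<phi> \<longrightarrow>
        (\<exists>D. is_derivation D \<and> \<phi> (\<Delta> a) = \<phi> (D a) \<and> \<phi> (\<Delta> b) = \<phi> (D b)))"

end

theory Submission
  imports Defs
begin


lemma mm_rdistrib: "((A::'a::comm_ring_1^'n^'n) + B) ** C = A ** C + B ** C"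
  by (vector matrix_matrix_mult_def sum.distrib[symmetric] field_simps)
lemma mm_ldiff: "(A::'a::comm_ring_1^'n^'n) ** (B - C) = A ** B - A ** C"
  by (vector matrix_matrix_mult_def sum_subtractf[symmetric] field_simps)
lemma mm_rdiff: "((A::'a::comm_ring_1^'n^'n) - B) ** C = A ** C - B ** C"
  by (vector matrix_matrix_mult_def sum_subtractf[symmetric] field_simps)
lemma cscale_mm_left: "cscale c A ** B = cscale c (A ** B)"
  by (simp add: cscale_def matrix_matrix_mult_def vec_eq_iff sum_distrib_left mult.assoc)
lemma cscale_mm_right: "A ** cscale c B = cscale c (A ** B)"
  by (simp add: cscale_def matrix_matrix_mult_def vec_eq_iff sum_distrib_left mult_ac)
lemma cscale_add: "cscale c (A + B) = cscale c A + cscale c B"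
  by (simp add: cscale_def vec_eq_iff algebra_simps)
lemma cscale_diff: "cscale c (A - B) = cscale c A - cscale c B"
  by (simp add: cscale_def vec_eq_iff algebra_simps)
lemma cscale_ladd: "cscale (c + d) A = cscale c A + cscale d A"
  by (simp add: cscale_def vec_eq_iff algebra_simps)
lemma cscale_0[simp]: "cscale 0 A = 0"
  by (simp add: cscale_def vec_eq_iff)
lemma cscale_1[simp]: "cscale 1 A = A"
  by (simp add: cscale_def vec_eq_iff)
lemma cscale_zero[simp]: "cscale c 0 = 0"
  by (simp add: cscale_def vec_eq_iff)
lemma cscale_cscale[simp]: "cscale c (cscale d A) = cscale (c*d) A"
  by (simp add: cscale_def vec_eq_iff)
lemma trace_cscale: "trace (cscale c A) = c * trace A"
  by (simp add: cscale_def trace_def sum_distrib_left)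

lemma vs_cscale: "vector_space (cscale :: complex \<Rightarrow> 'n::finite cmat \<Rightarrow> 'n cmat)"
  by (unfold_locales) (simp_all add: cscale_add cscale_ladd)

lemma vs_mult: "vector_space ((*) :: complex\<Rightarrow>complex\<Rightarrow>complex)"
  by unfold_locales (simp_all add: algebra_simps)

lemma lin_tr: "Vector_Spaces.linear cscale (*) (\<lambda>X::'n::finite cmat. trace (Y ** X))"
  unfolding Vector_Spaces.linear_iff
  by (simp add: vs_cscale vs_mult matrix_add_ldistrib trace_add cscale_mm_right trace_cscale)

definition munit :: "'n::finite \<Rightarrow> 'n \<Rightarrow> 'n cmat" where
  "munit i j = (\<chi> a b. if a = i \<and> b = j then 1 else 0)"

lemma trace_munit: "trace (munit j i ** X) = X $ i $ j"
proof -
  have "\<And>a. (\<Sum>k\<in>UNIV. (if a = j \<and> k = i then 1 else 0) * X $ k $ a) = (if a = j then X $ i $ a else 0)"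
    by (auto simp: if_distrib if_distribR cong: if_cong)
  then show ?thesis by (simp add: trace_def munit_def matrix_matrix_mult_def)
qed

lemma trace_sep: "(\<And>Y. trace (Y ** X) = (0::complex)) \<Longrightarrow> (X::'n::finite cmat) = 0"
  by (metis trace_munit vec_eq_iff zero_index)




lemma der_add: "is_derivation D \<Longrightarrow> D (x + y) = D x + D y"
  unfolding is_derivation_def Vector_Spaces.linear_iff by blast
lemma der_scale: "is_derivation D \<Longrightarrow> D (cscale c x) = cscale c (D x)"
  unfolding is_derivation_def Vector_Spaces.linear_iff by blast
lemma der_leib: "is_derivation D \<Longrightarrow> D (a ** b) = D a ** b + a ** D b"
  unfolding is_derivation_def by blast
lemma der_diff: "is_derivation D \<Longrightarrow> D (x - y) = D x - D y"
  by (metis der_add diff_add_cancel eq_diff_eq)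
lemma der_zero: "is_derivation D \<Longrightarrow> D 0 = 0"
  by (metis der_diff diff_self)
lemma der_one: "is_derivation D \<Longrightarrow> D (mat 1) = (0::'n::finite cmat)"
  using der_leib[of D "mat 1" "mat 1"] by simp

lemma trace_sum: "trace (sum f S :: complex^'n^'n) = (\<Sum>x\<in>S. trace (f x))"
  by (induction S rule: infinite_finite_induct) (auto simp: trace_add trace_0[unfolded mat_0])

lemma der_sum: "is_derivation D \<Longrightarrow> D (sum f S) = (\<Sum>x\<in>S. D (f x))"
  by (induction S rule: infinite_finite_induct) (auto simp: der_add der_zero)

lemma der_tr_comm: "is_derivation D \<Longrightarrow> trace (D (A ** B - B ** A)) = 0"
  by (simp add: der_diff der_leib trace_add trace_sub trace_mul_sym[of "D A"] trace_mul_sym[of A])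

lemma der_tr_idem:
  assumes D: "is_derivation D" and r: "r ** r = r"
  shows "trace (D r) = 0"
proof -
  have 1: "D r = D r ** r + r ** D r" using der_leib[OF D, of r r] r by simp
  have "r ** D r ** r = r ** (D r ** r + r ** D r) ** r" using 1 by simp
  also have "\<dots> = r ** D r ** r + r ** D r ** r"
    by (simp add: matrix_add_ldistrib mm_rdistrib matrix_mul_assoc r) (metis matrix_mul_assoc r)
  finally have 2: "r ** D r ** r = 0" by simp
  have "trace (D r) = trace (D r ** r) + trace (r ** D r)"
    using 1 by (metis trace_add)
  also have "\<dots> = 2 * trace (r ** D r ** r)"
  proof -
    have a: "trace (D r ** r) = trace (r ** D r)" by (rule trace_mul_sym)
    have b: "trace (r ** D r) = trace (r ** D r ** r)"
      by (metis matrix_mul_assoc r trace_mul_sym)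
    show ?thesis unfolding a b by simp
  qed
  finally show ?thesis using 2 by (simp add: trace_0[unfolded mat_0])
qed

lemma munit_mult: "munit i k ** munit k' j = (if k = k' then munit i j else 0)"
proof -
  have "(\<Sum>c\<in>UNIV. (if a = i \<and> c = k then 1 else 0) * (if c = k' \<and> b = j then 1 else 0))
     = (if k = k' \<and> a = i \<and> b = j then (1::complex) else 0)" for a b
  proof -
    have "(\<Sum>c\<in>UNIV. (if a = i \<and> c = k then 1 else 0) * (if c = k' \<and> b = j then 1 else 0))
      = (\<Sum>c\<in>UNIV. if c = k then (if a = i \<and> k = k' \<and> b = j then 1 else 0) else (0::complex))"
      by (rule sum.cong) auto
    then show ?thesis by (simp add: conj_ac)
  qed
  then show ?thesis
    by (auto simp: munit_def matrix_matrix_mult_def vec_eq_iff)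
qed

lemma times_if_one: "(c::complex) * (if P then 1 else 0) = (if P then c else 0)" by simp

lemma munit_decomp: "x = (\<Sum>i\<in>UNIV. \<Sum>j\<in>UNIV. cscale (x$i$j) (munit i j))"
proof -
  have h: "\<And>a b. (\<Sum>i\<in>UNIV. \<Sum>j\<in>UNIV. x$i$j * (if a = i \<and> b = j then 1 else 0)) = x$a$b"
  proof -
    fix a b
    have "(\<Sum>i\<in>UNIV. \<Sum>j\<in>UNIV. x$i$j * (if a = i \<and> b = j then 1 else 0))
       = (\<Sum>i\<in>UNIV. if i = a then (\<Sum>j\<in>UNIV. if j = b then x$i$j else 0) else 0)"
      by (rule sum.cong) (auto simp: times_if_one)
    then show "?thesis a b" by simp
  qed
  show ?thesis
    by (simp add: vec_eq_iff sum_component cscale_def munit_def h)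
qed

lemma der_trace:
  assumes D: "is_derivation D"
  shows "trace (D (x::'n::finite cmat)) = 0"
proof -
  fix k :: 'n
  have e1: "munit i k ** munit k j - munit k j ** munit i k = munit i j - (if j = i then munit k k else 0)" for i j
    by (simp add: munit_mult)
  have "x = (\<Sum>i\<in>UNIV. \<Sum>j\<in>UNIV. cscale (x$i$j) (munit i j))" by (rule munit_decomp)
  also have "\<dots> = (\<Sum>i\<in>UNIV. \<Sum>j\<in>UNIV. cscale (x$i$j) (munit i k ** munit k j - munit k j ** munit i k))
      + (\<Sum>i\<in>UNIV. \<Sum>j\<in>UNIV. cscale (x$i$j) (if j = i then munit k k else 0))"
    by (simp add: e1 cscale_diff sum_subtractf)
  also have "(\<Sum>i\<in>UNIV. \<Sum>j\<in>UNIV. cscale (x$i$j) (if j = i then munit k k else 0)) = cscale (trace x) (munit k k)"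
  proof -
    have "(\<Sum>i\<in>UNIV. \<Sum>j\<in>UNIV. cscale (x$i$j) (if j = i then munit k k else 0)) = (\<Sum>i\<in>UNIV. cscale (x$i$i) (munit k k))"
      by (simp add: if_distrib cong: if_cong)
    also have "\<dots> = cscale (trace x) (munit k k)"
      by (simp add: cscale_def trace_def vec_eq_iff sum_component sum_distrib_right)
    finally show ?thesis .
  qed
  finally have xd: "x = (\<Sum>i\<in>UNIV. \<Sum>j\<in>UNIV. cscale (x$i$j) (munit i k ** munit k j - munit k j ** munit i k))
      + cscale (trace x) (munit k k)" .
  have kk: "munit k k ** munit k k = munit k k" by (simp add: munit_mult)
  have "trace (D x) = (\<Sum>i\<in>UNIV. \<Sum>j\<in>UNIV. x$i$j * trace (D (munit i k ** munit k j - munit k j ** munit i k)))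
     + trace x * trace (D (munit k k))"
    by (subst xd) (simp add: der_add[OF D] der_sum[OF D] der_scale[OF D] trace_add trace_sum trace_cscale)
  also have "\<dots> = 0" by (simp add: der_tr_comm[OF D] der_tr_idem[OF D kk])
  finally show ?thesis .
qed

lemma der_tr2:
  assumes D: "is_derivation D" shows "trace (g ** D g) = 0"
proof -
  have "0 = trace (D (g ** g))" by (simp add: der_trace[OF D])
  also have "\<dots> = 2 * trace (g ** D g)"
    by (simp add: der_leib[OF D] trace_add trace_mul_sym[of "D g"])
  finally show ?thesis by simp
qed

lemma der_tr3:
  assumes D: "is_derivation D" shows "trace ((g ** g) ** D g) = 0"
proof -
  have "0 = trace (D (g ** (g ** g)))" by (simp add: der_trace[OF D])
  also have "\<dots> = trace (D g ** (g ** g)) + trace (g ** (D g ** g)) + trace (g ** (g ** D g))"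
    by (simp add: der_leib[OF D] trace_add matrix_add_ldistrib)
  also have "\<dots> = 3 * trace ((g ** g) ** D g)"
  proof -
    have a: "trace (D g ** (g ** g)) = trace ((g ** g) ** D g)" by (rule trace_mul_sym)
    have b: "trace (g ** (D g ** g)) = trace ((g ** g) ** D g)"
      by (metis matrix_mul_assoc trace_mul_sym)
    have c: "trace (g ** (g ** D g)) = trace ((g ** g) ** D g)"
      by (simp add: matrix_mul_assoc)
    show ?thesis unfolding a b c by simp
  qed
  finally show ?thesis by simp
qed




lemma trace_zero[simp]: "trace (0::complex^'n^'n) = 0" by (simp add: trace_def)

lemma w2l_tr:
  assumes "weak_2_local_derivation \<Delta>"
  shows "\<exists>D. is_derivation D \<and> trace (Y ** \<Delta> a) = trace (Y ** D a) \<and> trace (Y ** \<Delta> b) = trace (Y ** D b)"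
  using assms lin_tr[of Y] unfolding weak_2_local_derivation_def by blast

lemma w2l_Kc:
  fixes \<Delta> :: "'n::finite cmat \<Rightarrow> 'n cmat"
  assumes w: "weak_2_local_derivation \<Delta>" and b: "\<Delta> b = 0"
  shows "trace ((a - cscale c b) ** \<Delta> a) = 0"
    and "trace (((a - cscale c b) ** (a - cscale c b)) ** \<Delta> a) = 0"
proof -
  define g where "g = a - cscale c b"
  have ag: "a = g + cscale c b" by (simp add: g_def)
  {
    fix Y
    obtain D where D: "is_derivation D" and 1: "trace (Y ** \<Delta> a) = trace (Y ** D a)"
      and 2: "trace (Y ** \<Delta> b) = trace (Y ** D b)"
      using w2l_tr[OF w, of Y a b] by blast
    have "D a = D g + cscale c (D b)" using ag der_add[OF D] der_scale[OF D] by metis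
    then have "trace (Y ** \<Delta> a) = trace (Y ** D g) + c * trace (Y ** \<Delta> b)"
      using 1 2 by (simp add: matrix_add_ldistrib trace_add cscale_mm_right trace_cscale)
    then have "trace (Y ** \<Delta> a) = trace (Y ** D g)" using b by simp
    then have "\<exists>D. is_derivation D \<and> trace (Y ** \<Delta> a) = trace (Y ** D g)" using D by blast
  } note main = this
  obtain D1 where "is_derivation D1" "trace (g ** \<Delta> a) = trace (g ** D1 g)" using main by blast
  then show "trace ((a - cscale c b) ** \<Delta> a) = 0" using der_tr2 g_def by metis
  obtain D2 where "is_derivation D2" "trace ((g ** g) ** \<Delta> a) = trace ((g ** g) ** D2 g)" using main by blast
  then show "trace (((a - cscale c b) ** (a - cscale c b)) ** \<Delta> a) = 0" using der_tr3 g_def by metis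
qed

lemma w2l_K1:
  fixes \<Delta> :: "'n::finite cmat \<Rightarrow> 'n cmat"
  assumes w: "weak_2_local_derivation \<Delta>" and b: "\<Delta> b = 0"
  shows "trace (b ** \<Delta> a) = 0"
proof -
  have 0: "trace (a ** \<Delta> a) = 0" using w2l_Kc(1)[OF w b, of a 0] by simp
  have 1: "trace ((a - b) ** \<Delta> a) = 0" using w2l_Kc(1)[OF w b, of a 1] by simp
  show ?thesis using 0 1 by (simp add: mm_rdiff trace_sub)
qed

lemma cscale_m1: "cscale (-1) b = - b"
  by (simp add: cscale_def vec_eq_iff)

lemma w2l_K2:
  fixes \<Delta> :: "'n::finite cmat \<Rightarrow> 'n cmat"
  assumes w: "weak_2_local_derivation \<Delta>" and b: "\<Delta> b = 0"
  shows "trace ((a ** b + b ** a) ** \<Delta> a) = 0"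
proof -
  define X where "X = \<Delta> a"
  have 1: "trace (((a - b) ** (a - b)) ** X) = 0" using w2l_Kc(2)[OF w b, of a 1] by (simp add: X_def)
  have 2: "trace (((a + b) ** (a + b)) ** X) = 0" using w2l_Kc(2)[OF w b, of a "-1"] by (simp add: X_def cscale_m1)
  have e1: "trace (((a - b) ** (a - b)) ** X) = trace (a ** a ** X) - trace (a ** b ** X) - trace (b ** a ** X) + trace (b ** b ** X)"
    by (simp add: mm_ldiff mm_rdiff trace_add trace_sub)
  have e2: "trace (((a + b) ** (a + b)) ** X) = trace (a ** a ** X) + trace (a ** b ** X) + trace (b ** a ** X) + trace (b ** b ** X)"
    by (simp add: matrix_add_ldistrib mm_rdistrib trace_add)
  have "trace ((a ** b + b ** a) ** X) = trace (a ** b ** X) + trace (b ** a ** X)"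
    by (simp add: mm_rdistrib trace_add)
  then show ?thesis using 1 2 e1 e2 by (simp add: X_def[symmetric]) (metis add_diff_cancel_left' add_diff_cancel_right' diff_add_eq diff_diff_eq mult_2 mult_eq_0_iff zero_neq_numeral)
qed

lemma w2l_one:
  fixes \<Delta> :: "'n::finite cmat \<Rightarrow> 'n cmat"
  assumes w: "weak_2_local_derivation \<Delta>"
  shows "\<Delta> (mat 1) = 0"
proof (rule trace_sep)
  fix Y
  obtain D where "is_derivation D" "trace (Y ** \<Delta> (mat 1)) = trace (Y ** D (mat 1))"
    using w2l_tr[OF w, of Y "mat 1" "mat 1"] by blast
  then show "trace (Y ** \<Delta> (mat 1)) = 0" by (simp add: der_one trace_0[unfolded mat_0])
qed

lemma w2l_compl:
  fixes \<Delta> :: "'n::finite cmat \<Rightarrow> 'n cmat"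
  assumes w: "weak_2_local_derivation \<Delta>" and h: "\<Delta> (mat 1 - x) = 0"
  shows "\<Delta> x = 0"
proof (rule trace_sep)
  fix Y
  obtain D where D: "is_derivation D" and 1: "trace (Y ** \<Delta> x) = trace (Y ** D x)"
    and 2: "trace (Y ** \<Delta> (mat 1 - x)) = trace (Y ** D (mat 1 - x))"
    using w2l_tr[OF w, of Y x "mat 1 - x"] by blast
  have "D x = - D (mat 1 - x)" using der_diff[OF D, of "mat 1" x] der_one[OF D] by simp
  then show "trace (Y ** \<Delta> x) = 0" using 1 2 h
    by (simp add: trace_def matrix_matrix_mult_def sum_negf)
qed




lemma cadj_mult: "cadj (A ** B) = cadj B ** cadj (A::'n::finite cmat)"
  by (simp add: cadj_def matrix_matrix_mult_def vec_eq_iff mult.commute)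
lemma cadj_cadj[simp]: "cadj (cadj A) = A"
  by (simp add: cadj_def vec_eq_iff)
lemma cadj_diff: "cadj (A - B) = cadj A - cadj B"
  by (simp add: cadj_def vec_eq_iff)
lemma cadj_add: "cadj (A + B) = cadj A + cadj B"
  by (simp add: cadj_def vec_eq_iff)
lemma cadj_zero[simp]: "cadj 0 = 0"
  by (simp add: cadj_def vec_eq_iff)
lemma cadj_cscale: "cadj (cscale c A) = cscale (cnj c) (cadj A)"
  by (simp add: cadj_def cscale_def vec_eq_iff)

lemma aa_diag_zero:
  assumes "\<forall>j. (cadj A ** A) $ j $ j = 0"
  shows "(A::'n::finite cmat) = 0"
proof -
  have "A $ i $ j = 0" for i j
  proof -
    have h: "\<And>k. cnj (A$k$j) * A$k$j = of_real ((cmod (A$k$j))^2)"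
      by (simp add: complex_norm_square[symmetric] mult.commute)
    have "(cadj A ** A) $ j $ j = of_real (\<Sum>k\<in>UNIV. (cmod (A $ k $ j))^2)"
      by (simp add: cadj_def matrix_matrix_mult_def h of_real_sum)
    then have "complex_of_real (\<Sum>k\<in>UNIV. (cmod (A $ k $ j))^2) = 0" using assms by metis
    then have "(\<Sum>k\<in>UNIV. (cmod (A $ k $ j))^2) = 0" by (simp only: of_real_eq_0_iff)
    then have "\<forall>k\<in>UNIV. (cmod (A $ k $ j))^2 = 0"
      by (subst (asm) sum_nonneg_eq_0_iff) auto
    then show ?thesis by simp
  qed
  then show ?thesis by (simp add: vec_eq_iff)
qed

lemma aa_zero: "cadj A ** A = 0 \<Longrightarrow> (A::'n::finite cmat) = 0"
  by (rule aa_diag_zero) simp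

lemma munit_mid: "(A ** munit j j ** B) $ a $ b = A $ a $ j * B $ j $ b"
proof -
  have h: "(A ** munit j j) $ a $ c = (if c = j then A $ a $ j else 0)" for c
  proof -
    have "(A ** munit j j) $ a $ c = (\<Sum>k\<in>UNIV. if k = j then (if c = j then A $ a $ j else 0) else 0)"
      unfolding matrix_matrix_mult_def munit_def by (simp only: vec_lambda_beta) (rule sum.cong, auto)
    then show ?thesis by simp
  qed
  have "(A ** munit j j ** B) $ a $ b = (\<Sum>c\<in>UNIV. (A ** munit j j) $ a $ c * B $ c $ b)"
    by (simp only: matrix_matrix_mult_def[of "A ** munit j j" B] vec_lambda_beta)
  also have "\<dots> = (\<Sum>c\<in>UNIV. if c = j then A$a$j * B$j$b else 0)" by (rule sum.cong) (auto simp: h)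
  finally show ?thesis by simp
qed

lemma munit_sandwich: "munit j j ** M ** munit j j = cscale (M $ j $ j) (munit j j)"
proof -
  have 1: "(munit j j ** M) $ a $ j = (mat 1) $ a $ j * M $ j $ j" for a
    using munit_mid[of "mat 1" j M a j] by simp
  have "(munit j j ** M ** munit j j) $ a $ b = (mat 1) $ a $ j * M $ j $ j * (mat 1) $ j $ b" for a b
    using munit_mid[of "munit j j ** M" j "mat 1" a b] 1 by simp
  then show ?thesis by (auto simp: vec_eq_iff cscale_def munit_def mat_def)
qed

lemma cadj_munit: "cadj (munit j j) = munit j j"
  by (simp add: cadj_def munit_def vec_eq_iff)

lemma minproj_rank1:
  fixes p :: "'n::finite cmat"
  assumes mp: "minimal_projection p"
  shows "trace p = 1" "\<And>x. p ** x ** p = cscale (trace (p ** x)) p"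
proof -
  have pp: "p ** p = p" and pa: "cadj p = p" and pn: "p \<noteq> 0"
    using mp unfolding minimal_projection_def is_projection_def by auto
  obtain j where dj: "p $ j $ j \<noteq> 0"
  proof -
    have "\<exists>j. (cadj p ** p) $ j $ j \<noteq> 0" using aa_diag_zero[of p] pn by blast
    then show ?thesis using that pp pa by auto
  qed
  define d where "d = p $ j $ j"
  have dc: "cnj d = d"
  proof -
    have "cadj p $ j $ j = p $ j $ j" using pa by simp
    then show ?thesis by (simp add: cadj_def d_def)
  qed
  define E where "E = munit j j"
  have EpE: "E ** p ** E = cscale d E" by (simp add: E_def munit_sandwich d_def)
  define r where "r = cscale (1/d) (p ** E ** p)"
  have "r ** r = cscale (1/d * (1/d)) (p ** (E ** (p ** p) ** E) ** p)"
    by (simp add: r_def cscale_mm_left cscale_mm_right matrix_mul_assoc)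
  also have "\<dots> = r"
    using dj by (simp add: pp EpE cscale_mm_left cscale_mm_right r_def d_def[symmetric])
  finally have rr: "r ** r = r" .
  have ra: "cadj r = r"
    by (simp add: r_def cadj_cscale cadj_mult pa E_def cadj_munit matrix_mul_assoc)
      (metis dc complex_cnj_divide complex_cnj_one)
  have rp: "r ** p = r"
    by (simp add: r_def cscale_mm_left matrix_mul_assoc[symmetric] pp)
  have "r $ j $ j = 1 / d * (p $ j $ j * p $ j $ j)"
    by (simp add: r_def cscale_def E_def munit_mid)
  then have "r $ j $ j = d" using dj by (simp add: d_def)
  then have rn: "r \<noteq> 0" using dj d_def by auto
  have "r = p" using mp rr ra rp rn unfolding minimal_projection_def is_projection_def by blast
  then have pr: "p = cscale (1/d) (p ** E ** p)" by (simp add: r_def)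
  have "trace p = 1 / d * trace (p ** E ** p)" using pr trace_cscale by metis
  also have "trace (p ** E ** p) = trace (E ** p ** p)"
    using trace_mul_sym[of p "E ** p"] by (simp add: matrix_mul_assoc)
  also have "\<dots> = trace (cscale d E)"
  proof -
    have "E ** p ** p = E ** p" by (simp add: matrix_mul_assoc[symmetric] pp)
    also have "trace (E ** p) = trace (E ** E ** p)" by (simp add: E_def munit_mult)
    also have "\<dots> = trace (E ** p ** E)"
      using trace_mul_sym[of E "E ** p"] by (simp add: matrix_mul_assoc)
    finally show ?thesis using EpE by simp
  qed
  finally have "trace p = 1 / d * trace (cscale d E)" .
  moreover have "trace E = 1" by (simp add: E_def munit_def trace_def)
  ultimately show tp: "trace p = 1" using dj by (simp add: trace_cscale d_def)
  fix x
  define M where "M = p ** x ** p"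
  have "p ** M ** p = (p ** p) ** x ** (p ** p)" by (simp add: M_def matrix_mul_assoc)
  then have pMp: "p ** M ** p = M" by (simp add: pp M_def)
  have "M = r ** M ** r" using pMp \<open>r = p\<close> by simp
  also have "r ** M ** r = cscale (1/d * (1/d)) (p ** (E ** (p ** M ** p) ** E) ** p)"
    by (simp add: r_def cscale_mm_left cscale_mm_right matrix_mul_assoc)
  also have "\<dots> = cscale (1/d * (1/d)) (p ** (cscale (M$j$j) E) ** p)"
    using pMp by (simp add: E_def munit_sandwich)
  also have "\<dots> = cscale (M$j$j / d) r"
    by (simp add: r_def cscale_mm_left cscale_mm_right mult_ac)
  finally have 2: "M = cscale (M$j$j / d) p" using \<open>r = p\<close> by simp
  have "trace (p ** x) = trace M"
    using trace_mul_sym[of "p ** x" p] by (simp add: M_def matrix_mul_assoc pp)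
  also have "\<dots> = M$j$j / d" using 2 tp trace_cscale by (metis mult.right_neutral)
  finally show "p ** x ** p = cscale (trace (p ** x)) p" using 2 M_def by simp
qed




lemma trace_sandwich: "trace (Y ** (A ** X ** B)) = trace ((B ** Y ** A) ** (X::'n::finite cmat))"
  using trace_mul_sym[of "Y ** A ** X" B] by (simp add: matrix_mul_assoc)

lemma mm_ext: "u ** v = w \<Longrightarrow> A ** u ** v = A ** (w::'n::finite cmat)"
  by (metis matrix_mul_assoc)

lemma cscale_cancel: "c \<noteq> 0 \<Longrightarrow> cscale c A = 0 \<Longrightarrow> A = 0"
  by (metis cscale_cscale cscale_1 cscale_zero nonzero_divide_eq_eq divide_self_if mult.commute
      divide_inverse_commute inverse_eq_divide right_inverse)

theorem lemma2p9:
  fixes \<Delta> :: "'n::finite cmat \<Rightarrow> 'n cmat"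
    and p :: "nat \<Rightarrow> 'n cmat"
    and e :: "'n cmat"
  assumes w2l: "weak_2_local_derivation \<Delta>"
    and sym: "\<forall>a. cadj (\<Delta> (cadj a)) = \<Delta> a"
    and minp: "\<forall>i\<in>{1..CARD('n)}. minimal_projection (p i)"
    and orth: "\<forall>i\<in>{1..CARD('n)}. \<forall>j\<in>{1..CARD('n)}. i \<noteq> j \<longrightarrow> p i ** p j = 0"
    and e1n: "cadj e ** e = p CARD('n)" "e ** cadj e = p 1"
    and hq: "\<forall>a. \<Delta> ((mat 1 - p CARD('n)) ** a ** (mat 1 - p CARD('n))) = 0"
    and he: "\<Delta> e = 0"
  shows "\<forall>a. \<Delta> a = 0"
proof (cases "CARD('n) = 1")
  case True
  then obtain k :: 'n where U: "UNIV = {k}" using card_1_singletonE by blast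
  show ?thesis
  proof
    fix a
    define X where "X = \<Delta> a"
    have "trace (mat 1 ** X) = 0" using w2l_K1[OF w2l w2l_one[OF w2l], of a] by (simp add: X_def)
    then have "X $ k $ k = 0" by (simp add: trace_def U)
    moreover have "\<And>i::'n. i = k" using U by blast
    ultimately have "X = 0" by (simp add: vec_eq_iff) (metis)
    then show "\<Delta> a = 0" by (simp add: X_def)
  qed
next
  case False
  define N where "N = CARD('n)"
  have N1: "N \<noteq> 1" "1 \<le> N" using False by (simp_all add: N_def)
  define P where "P = p N"
  define P1 where "P1 = p 1"
  have mpN: "minimal_projection P" using minp N1 by (simp add: P_def N_def)
  have mp1: "minimal_projection P1" using minp N1 by (simp add: P1_def N_def)
  have pp: "P ** P = P" and pa: "cadj P = P" using mpN unfolding minimal_projection_def is_projection_def by auto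
  have p1p1: "P1 ** P1 = P1" and p1a: "cadj P1 = P1" using mp1 unfolding minimal_projection_def is_projection_def by auto
  have PP1: "P ** P1 = 0" using orth N1 by (simp add: P_def P1_def N_def)
  have tP: "trace P = 1" and sand: "\<And>x. P ** x ** P = cscale (trace (P ** x)) P"
    using minproj_rank1[OF mpN] by auto
  have ee: "cadj e ** e = P" "e ** cadj e = P1" using e1n by (simp_all add: P_def P1_def N_def)
  define q where "q = mat 1 - P"
  have qq: "q ** q = q" by (simp add: q_def mm_ldiff mm_rdiff pp)
  have qP: "q ** P = 0" by (simp add: q_def mm_rdiff pp)
  have Pq: "P ** q = 0" by (simp add: q_def mm_ldiff pp)
  have Pq1: "P + q = mat 1" by (simp add: q_def)
  have c1: "cadj (mat 1 :: 'n cmat) = mat 1" by (simp add: cadj_def mat_def vec_eq_iff)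
  have qa: "cadj q = q" by (simp add: q_def cadj_diff pa c1)
  have "cadj (e - e ** P) ** (e - e ** P) = 0"
  proof -
    have t2: "cadj e ** (e ** P) = P" by (simp add: matrix_mul_assoc ee pp)
    have t3: "(P ** cadj e) ** e = P" by (simp add: matrix_mul_assoc[symmetric] ee pp)
    have t4: "(P ** cadj e) ** (e ** P) = P" by (metis matrix_mul_assoc ee(1) pp)
    show ?thesis by (simp add: cadj_diff cadj_mult pa mm_ldiff mm_rdiff ee t2 t3 t4)
  qed
  then have eP: "e ** P = e" using aa_zero by fastforce
  have "cadj (cadj e - cadj e ** P1) ** (cadj e - cadj e ** P1) = 0"
  proof -
    have t2: "e ** (cadj e ** P1) = P1" by (simp add: matrix_mul_assoc ee p1p1)
    have t3: "(P1 ** e) ** cadj e = P1" by (simp add: matrix_mul_assoc[symmetric] ee p1p1)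
    have t4: "(P1 ** e) ** (cadj e ** P1) = P1" by (metis matrix_mul_assoc ee(2) p1p1)
    show ?thesis by (simp add: cadj_diff cadj_mult p1a mm_ldiff mm_rdiff ee t2 t3 t4)
  qed
  then have "cadj e = cadj e ** P1" using aa_zero by fastforce
  then have P1e: "P1 ** e = e" by (metis cadj_cadj cadj_mult p1a)
  have Pe: "P ** e = 0" by (metis P1e PP1 matrix_mul_assoc times0_left)
  have ee0: "e ** e = 0" by (metis Pe eP matrix_mul_assoc times0_right)
  have qe: "q ** e = e" by (simp add: q_def mm_rdiff Pe)
  have Pes: "P ** cadj e = cadj e" by (metis cadj_mult eP pa)
  have esq: "cadj e ** q = cadj e" by (metis cadj_mult qe qa)
  have eses: "cadj e ** cadj e = 0" by (metis cadj_mult ee0 cadj_zero)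
  have tee: "trace (e ** cadj e) = 1" using trace_mul_sym[of e "cadj e"] ee tP by simp
  have tese: "trace (cadj e ** e) = 1" using ee tP by simp
  have Dqxq: "\<Delta> (q ** x ** q) = 0" for x using hq by (simp add: q_def P_def N_def)
  have Dq: "\<Delta> q = 0" using Dqxq[of "mat 1"] qq by simp
  have DP: "\<Delta> P = 0" using w2l_compl[OF w2l] Dq by (simp add: q_def)
  have Des: "\<Delta> (cadj e) = 0" using sym he by (metis cadj_cadj cadj_zero)
  have good: "\<Delta> a = 0" if t1: "trace (e ** a) \<noteq> 0" and t2: "trace (cadj e ** a) \<noteq> 0" for a
  proof -
    define X where "X = \<Delta> a"
    have kq: "trace ((q ** Y ** q) ** X) = 0" for Y using w2l_K1[OF w2l Dqxq] X_def by simp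
    have kP: "trace (P ** X) = 0" using w2l_K1[OF w2l DP] X_def by simp
    have ke: "trace (e ** X) = 0" using w2l_K1[OF w2l he] X_def by simp
    have kes: "trace (cadj e ** X) = 0" using w2l_K1[OF w2l Des] X_def by simp
    have qXq: "q ** X ** q = 0"
      by (rule trace_sep) (simp add: trace_sandwich kq)
    have PXP: "P ** X ** P = 0" using sand[of X] kP by simp
    have Xe: "X ** e = 0"
    proof -
      have "X ** e = (P + q) ** X ** e" using Pq1 by simp
      also have "\<dots> = P ** X ** e + q ** X ** e" by (simp add: mm_rdistrib)
      also have "q ** X ** e = 0" by (metis qXq qe matrix_mul_assoc times0_left)
      also have "P ** X ** e = P ** (X ** e) ** P"
        by (simp add: matrix_mul_assoc[symmetric] eP)
      also have "\<dots> = cscale (trace (P ** (X ** e))) P" by (rule sand)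
      also have "trace (P ** (X ** e)) = trace (e ** X)"
        using trace_mul_sym[of "P ** X" e] by (simp add: matrix_mul_assoc eP)
      finally show ?thesis using ke by simp
    qed
    have esX: "cadj e ** X = 0"
    proof -
      have "cadj e ** X = cadj e ** X ** (P + q)" using Pq1 by simp
      also have "\<dots> = cadj e ** X ** P + cadj e ** X ** q" by (simp add: matrix_add_ldistrib)
      also have "cadj e ** X ** q = 0"
        by (metis qXq esq matrix_mul_assoc times0_right)
      also have "cadj e ** X ** P = P ** (cadj e ** X) ** P"
        by (simp add: matrix_mul_assoc Pes)
      also have "\<dots> = cscale (trace (P ** (cadj e ** X))) P" by (rule sand)
      also have "trace (P ** (cadj e ** X)) = trace (cadj e ** X)"
        by (simp add: matrix_mul_assoc Pes)
      finally show ?thesis using kes by simp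
    qed
    define M where "M = X ** a + a ** X"
    have qMq: "q ** M ** q = 0"
    proof (rule trace_sep)
      fix Y
      have "trace (Y ** (q ** M ** q)) = trace ((q ** Y ** q) ** M)" by (rule trace_sandwich)
      also have "\<dots> = trace ((q ** Y ** q) ** X ** a) + trace ((q ** Y ** q) ** a ** X)"
        by (simp add: M_def matrix_add_ldistrib trace_add matrix_mul_assoc)
      also have "trace ((q ** Y ** q) ** X ** a) = trace (a ** (q ** Y ** q) ** X)"
        using trace_mul_sym[of "(q ** Y ** q) ** X" a] by (simp add: matrix_mul_assoc)
      also have "trace (a ** (q ** Y ** q) ** X) + trace ((q ** Y ** q) ** a ** X)
          = trace ((a ** (q ** Y ** q) + (q ** Y ** q) ** a) ** X)"
        by (simp add: mm_rdistrib trace_add)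
      also have "\<dots> = 0" using w2l_K2[OF w2l Dqxq, of a] X_def by simp
      finally show "trace (Y ** (q ** M ** q)) = 0" .
    qed
    have qXP: "q ** X ** P = 0"
    proof -
      have "0 = q ** M ** q ** e" using qMq by simp
      also have "\<dots> = q ** M ** e" by (simp add: matrix_mul_assoc[symmetric] qe)
      also have "\<dots> = q ** X ** a ** e + q ** a ** (X ** e)"
        by (simp add: M_def matrix_add_ldistrib mm_rdistrib matrix_mul_assoc)
      also have "q ** a ** (X ** e) = 0" using Xe by simp
      also have "q ** X ** a ** e = q ** X ** (P + q) ** a ** e" using Pq1 by simp
      also have "\<dots> = q ** X ** P ** a ** e + (q ** X ** q) ** a ** e"
        by (simp add: matrix_add_ldistrib mm_rdistrib)
      also have "(q ** X ** q) ** a ** e = 0" using qXq by simp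
      also have "q ** X ** P ** a ** e = (q ** X) ** (P ** (a ** e) ** P)"
        by (simp add: matrix_mul_assoc mm_ext[OF eP])
      also have "\<dots> = (q ** X) ** cscale (trace (P ** (a ** e))) P" by (simp add: sand)
      also have "trace (P ** (a ** e)) = trace (e ** a)"
        using trace_mul_sym[of P "a ** e"] trace_mul_sym[of a e] by (simp add: matrix_mul_assoc[symmetric] eP)
      finally have "cscale (trace (e ** a)) (q ** X ** P) = 0"
        by (simp add: cscale_mm_right matrix_mul_assoc)
      then show ?thesis using t1 cscale_cancel by blast
    qed
    have PXq: "P ** X ** q = 0"
    proof -
      have "0 = cadj e ** (q ** M ** q)" using qMq by simp
      also have "\<dots> = cadj e ** M ** q" by (simp add: matrix_mul_assoc esq)
      also have "\<dots> = (cadj e ** X) ** a ** q + cadj e ** a ** X ** q"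
        by (simp add: M_def matrix_add_ldistrib mm_rdistrib matrix_mul_assoc)
      also have "(cadj e ** X) ** a ** q = 0" using esX by simp
      also have "cadj e ** a ** X ** q = cadj e ** a ** (P + q) ** X ** q" using Pq1 by simp
      also have "\<dots> = cadj e ** a ** P ** X ** q + cadj e ** a ** (q ** X ** q)"
        by (simp add: matrix_add_ldistrib mm_rdistrib matrix_mul_assoc)
      also have "cadj e ** a ** (q ** X ** q) = 0" using qXq by simp
      also have "cadj e ** a ** P ** X ** q = (P ** (cadj e ** a) ** P) ** (X ** q)"
        by (simp add: matrix_mul_assoc Pes)
      also have "\<dots> = cscale (trace (P ** (cadj e ** a))) P ** (X ** q)" by (simp add: sand)
      also have "trace (P ** (cadj e ** a)) = trace (cadj e ** a)"
        by (simp add: matrix_mul_assoc Pes)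
      finally have "cscale (trace (cadj e ** a)) (P ** X ** q) = 0"
        by (simp add: cscale_mm_left matrix_mul_assoc)
      then show ?thesis using t2 cscale_cancel by blast
    qed
    have "X = (P + q) ** X ** (P + q)" using Pq1 by simp
    also have "\<dots> = P ** X ** P + P ** X ** q + (q ** X ** P + q ** X ** q)"
      by (simp add: matrix_add_ldistrib mm_rdistrib)
    finally have "X = 0" using PXP PXq qXP qXq by simp
    then show ?thesis by (simp add: X_def)
  qed
  show ?thesis
  proof
    fix a
    show "\<Delta> a = 0"
    proof (rule trace_sep)
      fix m
      define X where "X = \<Delta> a"
      define t where "t = trace (e ** m)"
      define s where "s = trace (cadj e ** m)"
      define l where "l = complex_of_real (1 + cmod t + cmod s)"
      define b where "b = m + cscale l (e + cadj e)"
      have tb: "trace (e ** b) = t + l"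
        by (simp add: b_def t_def matrix_add_ldistrib cscale_mm_right trace_add trace_cscale ee0 tee)
      have sb: "trace (cadj e ** b) = s + l"
        by (simp add: b_def s_def matrix_add_ldistrib cscale_mm_right trace_add trace_cscale eses tese)
      have nz: "z + l \<noteq> 0" if "cmod z \<le> cmod t + cmod s" for z
      proof
        assume "z + l = 0"
        then have "cmod z = cmod l" by (metis add.inverse_unique norm_minus_cancel)
        also have "cmod l = 1 + cmod t + cmod s" unfolding l_def norm_of_real by (simp add: abs_of_nonneg)
        finally show False using that by simp
      qed
      have Db: "\<Delta> b = 0" using good[of b] tb sb nz[of t] nz[of s] by simp
      have 1: "trace (b ** X) = 0" using w2l_K1[OF w2l Db] X_def by simp
      have 2: "trace (e ** X) = 0" using w2l_K1[OF w2l he] X_def by simp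
      have 3: "trace (cadj e ** X) = 0" using w2l_K1[OF w2l Des] X_def by simp
      have "trace (b ** X) = trace (m ** X) + l * (trace (e ** X) + trace (cadj e ** X))"
        by (simp add: b_def mm_rdistrib cscale_mm_left trace_add trace_cscale)
      then show "trace (m ** \<Delta> a) = 0" using 1 2 3 X_def by simp
    qed
  qed
qed


end
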